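(* Let $n \geq 1$ and let $A=(a_{\{i,j\}})$ and $B=(b_{\{i,j\}})$ be real symmetric $n\times n$ matrices, regarded as having $2n+2\binom{n}{2}$ independent commuting indeterminates $a_{\{i,j\}}, b_{\{i,j\}}$ ($\{i,j\}\subseteq[n]$, $1\le |\{i,j\}|\le 2$) as entries. Define: - $z_1$: the vector indexed by the subsets $S\subseteq [n]$ with $|S|\in\{1,2\}$ whose $S$-entry is $a_S b_S$ (so the $\{i\}$-entry is $a_{\{i,i\}}b_{\{i,i\}}$); - $Q_1$: the $(n+\binom n2)\times(n+\binom n2)$ matrix indexed by the same subsets, with $(S,S')$-entry $6\,|S\cap S'|$; - for $1\le i<j\le n$, $z_{2,(i,j)}\in\mathbb{R}[a,b]^{2n}$: the vector whose $k$-th entry is $a_{\{i,k\}}b_{\{j,k\}}$ and whose $(n+k)$-th entry is $a_{\{j,k\}}b_{\{i,k\}}$, for $k=1,\dots,n$; - $Q_2$: the $2n\times 2n$ block matrix $\begin{pmatrix}4J_n & 2J_n\\ 2J_n & 4J_n\end{pmatrix}$, where $J_n$ is the $n\times n$ all-ones matrix. Then $Q_1$ and $Q_2$ are positive semidefinite, and the coefficient of $t^2$ in $\operatorname{trace}((A+tB)^4)$ equals, as a polynomial identity, $$z_1^TQ_1z_1+\sum_{1\le i<j\le n} z_{2,(i,j)}^TQ_2\,z_{2,(i,j)}.$$ In particular this coefficient is a sum of squares of polynomials in the entries of $A$ and $B$, and hence is non-negative for all real symmetric $n\times n$ matrices $A,B$.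
   Context: $[n]=\{1,\dots,n\}$. The entry of a symmetric matrix in positions $(i,j)$ and $(j,i)$ is denoted by a single symbol indexed by the unordered set $\{i,j\}$; e.g. $a_{\{i,i\}}$ is the $(i,i)$ diagonal entry of $A$. The coefficient of $t^r$ in $\operatorname{trace}((A+tB)^m)$ is taken with $t$ a scalar indeterminate. *)

theory Defs
  imports "HOL-Computational_Algebra.Polynomial"
begin

text \<open>Square matrices of size n are functions nat => nat => 'a, meaningful on indices 1..n.\<close>

definition mmul :: "nat \<Rightarrow> (nat \<Rightarrow> nat \<Rightarrow> 'a::comm_semiring_1) \<Rightarrow> (nat \<Rightarrow> nat \<Rightarrow> 'a) \<Rightarrow> nat \<Rightarrow> nat \<Rightarrow> 'a" where
  "mmul n X Y = (\<lambda>i j. \<Sum>k=1..n. X i k * Y k j)"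

fun mpow :: "nat \<Rightarrow> (nat \<Rightarrow> nat \<Rightarrow> 'a::comm_semiring_1) \<Rightarrow> nat \<Rightarrow> nat \<Rightarrow> nat \<Rightarrow> 'a" where
  "mpow n X 0 = (\<lambda>i j. if i = j then 1 else 0)"
| "mpow n X (Suc m) = mmul n (mpow n X m) X"

definition mtrace :: "nat \<Rightarrow> (nat \<Rightarrow> nat \<Rightarrow> 'a::comm_semiring_1) \<Rightarrow> 'a" where
  "mtrace n X = (\<Sum>i=1..n. X i i)"

definition symmat :: "(nat set \<Rightarrow> 'a) \<Rightarrow> nat \<Rightarrow> nat \<Rightarrow> 'a" where
  "symmat a = (\<lambda>i j. a {i, j})"

definition pencil :: "(nat set \<Rightarrow> real) \<Rightarrow> (nat set \<Rightarrow> real) \<Rightarrow> nat \<Rightarrow> nat \<Rightarrow> real poly" where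
  "pencil a b = (\<lambda>i j. [: symmat a i j, symmat b i j :])"

definition trace_coeff :: "nat \<Rightarrow> (nat set \<Rightarrow> real) \<Rightarrow> (nat set \<Rightarrow> real) \<Rightarrow> nat \<Rightarrow> nat \<Rightarrow> real" where
  "trace_coeff n a b m r = coeff (mtrace n (mpow n (pencil a b) m)) r"

definition qform :: "'i set \<Rightarrow> ('i \<Rightarrow> 'i \<Rightarrow> real) \<Rightarrow> ('i \<Rightarrow> real) \<Rightarrow> real" where
  "qform I Q z = (\<Sum>s\<in>I. \<Sum>s'\<in>I. z s * Q s s' * z s')"

definition psd :: "'i set \<Rightarrow> ('i \<Rightarrow> 'i \<Rightarrow> real) \<Rightarrow> bool" where
  "psd I Q \<longleftrightarrow> (\<forall>s\<in>I. \<forall>s'\<in>I. Q s s' = Q s' s) \<and> (\<forall>z. qform I Q z \<ge> 0)"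

definition subsets12 :: "nat \<Rightarrow> nat set set" where
  "subsets12 n = {S. S \<subseteq> {1..n} \<and> (card S = 1 \<or> card S = 2)}"

definition z1 :: "(nat set \<Rightarrow> real) \<Rightarrow> (nat set \<Rightarrow> real) \<Rightarrow> nat set \<Rightarrow> real" where
  "z1 a b = (\<lambda>S. a S * b S)"

definition Q1 :: "nat set \<Rightarrow> nat set \<Rightarrow> real" where
  "Q1 = (\<lambda>S S'. 6 * real (card (S \<inter> S')))"

definition z2 :: "nat \<Rightarrow> (nat set \<Rightarrow> real) \<Rightarrow> (nat set \<Rightarrow> real) \<Rightarrow> nat \<Rightarrow> nat \<Rightarrow> nat \<Rightarrow> real" where
  "z2 n a b i j = (\<lambda>k. if k \<le> n then a {i, k} * b {j, k} else a {j, k - n} * b {i, k - n})"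

definition Q2 :: "nat \<Rightarrow> nat \<Rightarrow> nat \<Rightarrow> real" where
  "Q2 n = (\<lambda>k l. if (k \<le> n) = (l \<le> n) then 4 else 2)"

end

theory Submission
  imports Defs
begin

lemma coeff4: "coeff ([:a1,b1:]*[:a2,b2:]*[:a3,b3:]*[:a4::real,b4:]) 2 = a1*a2*b3*b4 + a1*b2*a3*b4 + a1*b2*b3*a4 + b1*a2*a3*b4 + b1*a2*b3*a4 + b1*b2*a3*a4"
  by (simp add: algebra_simps numeral_2_eq_2)

lemma nest4: "(\<Sum>i\<in>I. \<Sum>k\<in>I. \<Sum>l\<in>I. \<Sum>m\<in>I. (f i k l m::real)) = (\<Sum>(i,k,l,m)\<in>I\<times>I\<times>I\<times>I. f i k l m)"
  by (simp add: sum.cartesian_product)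

lemma trace_expand:
  "trace_coeff n a b 4 2 = (\<Sum>i=1..n. \<Sum>k=1..n. \<Sum>l=1..n. \<Sum>m=1..n.
     coeff (pencil a b i k * pencil a b k l * pencil a b l m * pencil a b m i) 2)"
proof -
  let ?X = "pencil a b"
  have h1: "mpow n ?X (Suc 0) i j = ?X i j" if "i \<in> {1..n}" for i j
  proof -
    have "mpow n ?X (Suc 0) i j = (\<Sum>k\<in>{1..n}. (if i = k then 1 else 0) * ?X k j)"
      unfolding mpow.simps mmul_def by simp
    also have "\<dots> = (\<Sum>k\<in>{1..n}. if i = k then ?X k j else 0)"
      by (rule sum.cong) auto
    finally have "mpow n ?X (Suc 0) i j = (\<Sum>k\<in>{1..n}. if i = k then ?X k j else 0)" .
    then show ?thesis using that by (simp add: sum.delta)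
  qed
  have h4: "mpow n ?X 4 i i = (\<Sum>m=1..n. \<Sum>l=1..n. \<Sum>k=1..n. ?X i k * ?X k l * ?X l m * ?X m i)"
    if "i \<in> {1..n}" for i
  proof -
    have f: "(4::nat) = Suc (Suc (Suc 1))" by simp
    have "mpow n ?X 4 i i = (\<Sum>m=1..n. (\<Sum>l=1..n. (\<Sum>k=1..n. mpow n ?X 1 i k * ?X k l) * ?X l m) * ?X m i)"
      by (simp only: f mpow.simps(2) mmul_def)
    then show ?thesis
      by (simp del: mpow.simps add: sum_distrib_right h1[OF that] mult.assoc)
  qed
  have "trace_coeff n a b 4 2 = (\<Sum>i=1..n. coeff (mpow n ?X 4 i i) 2)"
    by (simp add: trace_coeff_def mtrace_def coeff_sum)
  also have "\<dots> = (\<Sum>i=1..n. \<Sum>m=1..n. \<Sum>l=1..n. \<Sum>k=1..n. coeff (?X i k * ?X k l * ?X l m * ?X m i) 2)"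
    by (rule sum.cong[OF refl]) (simp add: h4 coeff_sum)
  also have "\<dots> = (\<Sum>i=1..n. \<Sum>k=1..n. \<Sum>l=1..n. \<Sum>m=1..n. coeff (?X i k * ?X k l * ?X l m * ?X m i) 2)"
    unfolding nest4
    by (rule sum.reindex_bij_witness[where i="\<lambda>(i,k,l,m). (i,m,l,k)" and j="\<lambda>(i,k,l,m). (i,m,l,k)"]) auto
  finally show ?thesis .
qed

definition PP :: "nat \<Rightarrow> (nat set \<Rightarrow> real) \<Rightarrow> (nat set \<Rightarrow> real) \<Rightarrow> nat \<Rightarrow> nat \<Rightarrow> real" where
  "PP n a b i j = (\<Sum>l=1..n. a {i,l} * b {j,l})"

lemma lhs_six:
  "trace_coeff n a b 4 2 = (\<Sum>i=1..n. \<Sum>k=1..n. \<Sum>l=1..n. \<Sum>m=1..n.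
      a {i,k} * a {k,l} * b {l,m} * b {m,i} + a {i,k} * b {k,l} * a {l,m} * b {m,i}
    + a {i,k} * b {k,l} * b {l,m} * a {m,i} + b {i,k} * a {k,l} * a {l,m} * b {m,i}
    + b {i,k} * a {k,l} * b {l,m} * a {m,i} + b {i,k} * b {k,l} * a {l,m} * a {m,i})"
  unfolding trace_expand pencil_def symmat_def coeff4 ..

abbreviation "S4 n f \<equiv> (\<Sum>i=1..n. \<Sum>k=1..n. \<Sum>l=1..n. \<Sum>m=1..n. (f i k l m :: real))"

lemma sum4_distrib: "S4 n (\<lambda>i k l m. f i k l m + g i k l m) = S4 n f + S4 n g"
  by (simp add: sum.distrib)

definition T1 where "T1 a b i j k l = a {i,k} * b {j,k} * a {i,l} * b {j,l}"
definition T2 where "T2 a b i j k l = a {i,k} * b {j,k} * a {j,l} * b {i,l}"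

lemma r1: "S4 n (\<lambda>i k l m. a {i,k} * a {k,l} * b {l,m} * b {m,i}) = S4 n (T1 a b)"
  unfolding nest4
  apply (rule sum.reindex_bij_witness[where j="\<lambda>(i,k,l,m). (k,m,i,l)" and i="\<lambda>(p,q,r,s). (r,p,s,q)"])
  apply auto
  apply (simp add: T1_def insert_commute mult_ac)
  done

lemma r2: "S4 n (\<lambda>i k l m. a {i,k} * b {k,l} * a {l,m} * b {m,i}) = S4 n (T2 a b)"
  unfolding nest4
  apply (rule sum.reindex_bij_witness[where j="\<lambda>(i,k,l,m). (i,l,k,m)" and i="\<lambda>(p,q,r,s). (p,r,q,s)"])
  apply auto
  apply (simp add: T2_def insert_commute mult_ac)
  done

lemma r3: "S4 n (\<lambda>i k l m. a {i,k} * b {k,l} * b {l,m} * a {m,i}) = S4 n (T1 a b)"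
  unfolding nest4
  apply (rule sum.reindex_bij_witness[where j="\<lambda>(i,k,l,m). (i,l,k,m)" and i="\<lambda>(p,q,r,s). (p,r,q,s)"])
  apply auto
  apply (simp add: T1_def insert_commute mult_ac)
  done

lemma r4: "S4 n (\<lambda>i k l m. b {i,k} * a {k,l} * a {l,m} * b {m,i}) = S4 n (T1 a b)"
  unfolding nest4
  apply (rule sum.reindex_bij_witness[where j="\<lambda>(i,k,l,m). (l,i,k,m)" and i="\<lambda>(p,q,r,s). (q,r,p,s)"])
  apply auto
  apply (simp add: T1_def insert_commute mult_ac)
  done

lemma r5: "S4 n (\<lambda>i k l m. b {i,k} * a {k,l} * b {l,m} * a {m,i}) = S4 n (T2 a b)"
  unfolding nest4
  apply (rule sum.reindex_bij_witness[where j="\<lambda>(i,k,l,m). (k,m,l,i)" and i="\<lambda>(p,q,r,s). (s,p,r,q)"])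
  apply auto
  apply (simp add: T2_def insert_commute mult_ac)
  done

lemma r6: "S4 n (\<lambda>i k l m. b {i,k} * b {k,l} * a {l,m} * a {m,i}) = S4 n (T1 a b)"
  unfolding nest4
  apply (rule sum.reindex_bij_witness[where j="\<lambda>(i,k,l,m). (m,k,l,i)" and i="\<lambda>(p,q,r,s). (s,q,r,p)"])
  apply auto
  apply (simp add: T1_def insert_commute mult_ac)
  done

lemma lhs_canon: "trace_coeff n a b 4 2 = 4 * S4 n (T1 a b) + 2 * S4 n (T2 a b)"
proof -
  have "trace_coeff n a b 4 2 = S4 n (\<lambda>i k l m. a {i,k} * a {k,l} * b {l,m} * b {m,i}) + S4 n (\<lambda>i k l m. a {i,k} * b {k,l} * a {l,m} * b {m,i})
    + S4 n (\<lambda>i k l m. a {i,k} * b {k,l} * b {l,m} * a {m,i}) + S4 n (\<lambda>i k l m. b {i,k} * a {k,l} * a {l,m} * b {m,i})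
    + S4 n (\<lambda>i k l m. b {i,k} * a {k,l} * b {l,m} * a {m,i}) + S4 n (\<lambda>i k l m. b {i,k} * b {k,l} * a {l,m} * a {m,i})"
    unfolding lhs_six by (simp only: sum.distrib)
  also have "\<dots> = 4 * S4 n (T1 a b) + 2 * S4 n (T2 a b)"
    unfolding r1[where n=n and a=a and b=b] r2[where n=n and a=a and b=b] r3[where n=n and a=a and b=b] r4[where n=n and a=a and b=b] r5[where n=n and a=a and b=b] r6[where n=n and a=a and b=b] by simp
  finally show ?thesis .
qed

lemma PP1: "PP n a b i j * PP n a b i j = (\<Sum>k=1..n. \<Sum>l=1..n. T1 a b i j k l)"
  unfolding PP_def sum_product T1_def by (simp add: mult_ac)
lemma PP2: "PP n a b i j * PP n a b j i = (\<Sum>k=1..n. \<Sum>l=1..n. T2 a b i j k l)"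
  unfolding PP_def sum_product T2_def by (simp add: mult_ac)

lemma lhs_PP: "trace_coeff n a b 4 2 = (\<Sum>i=1..n. \<Sum>j=1..n. 4 * (PP n a b i j)^2 + 2 * (PP n a b i j * PP n a b j i))"
  unfolding lhs_canon power2_eq_square PP1 PP2
  by (simp add: sum.distrib sum_distrib_left)

lemma fin_sub: "finite (subsets12 n)"
  by (rule finite_subset[of _ "Pow {1..n}"]) (auto simp: subsets12_def)

lemma card_int: assumes "S \<in> subsets12 n"
  shows "real (card (S \<inter> S')) = (\<Sum>k=1..n. (if k \<in> S then 1 else 0) * (if k \<in> S' then 1 else 0))"
proof -
  have "S \<inter> S' = {1..n} \<inter> (S \<inter> S')" using assms by (auto simp: subsets12_def)
  hence "real (card (S \<inter> S')) = (\<Sum>k\<in>{1..n} \<inter> (S \<inter> S'). 1)" by simp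
  also have "\<dots> = (\<Sum>k=1..n. if k \<in> S \<inter> S' then 1 else 0)" by (rule sum.inter_restrict) simp
  also have "\<dots> = (\<Sum>k=1..n. (if k \<in> S then 1 else 0) * (if k \<in> S' then 1 else 0))"
    by (rule sum.cong) auto
  finally show ?thesis .
qed

lemma Q1_form: "qform (subsets12 n) Q1 z = 6 * (\<Sum>k=1..n. (\<Sum>S\<in>subsets12 n. (if k \<in> S then 1 else 0) * z S)^2)"
proof -
  let ?e = "\<lambda>k S. (if k \<in> S then 1 else 0 :: real)"
  have "qform (subsets12 n) Q1 z = (\<Sum>S\<in>subsets12 n. \<Sum>S'\<in>subsets12 n. \<Sum>k=1..n. 6 * ((?e k S * z S) * (?e k S' * z S')))"
    unfolding qform_def Q1_def
    by (intro sum.cong refl) (simp add: card_int sum_distrib_left sum_distrib_right mult_ac)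
  also have "\<dots> = (\<Sum>S\<in>subsets12 n. \<Sum>k=1..n. \<Sum>S'\<in>subsets12 n. 6 * ((?e k S * z S) * (?e k S' * z S')))"
    by (rule sum.cong[OF refl]) (rule sum.swap)
  also have "\<dots> = (\<Sum>k=1..n. \<Sum>S\<in>subsets12 n. \<Sum>S'\<in>subsets12 n. 6 * ((?e k S * z S) * (?e k S' * z S')))"
    by (rule sum.swap)
  also have "\<dots> = 6 * (\<Sum>k=1..n. (\<Sum>S\<in>subsets12 n. ?e k S * z S)^2)"
    unfolding power2_eq_square sum_product by (simp only: sum_distrib_left)
  finally show ?thesis .
qed

lemma psd_Q1: "psd (subsets12 n) Q1"
  unfolding psd_def
proof
  show "\<forall>s\<in>subsets12 n. \<forall>s'\<in>subsets12 n. Q1 s s' = Q1 s' s" by (simp add: Q1_def Int_commute)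
  show "\<forall>z. 0 \<le> qform (subsets12 n) Q1 z" by (simp add: Q1_form sum_nonneg)
qed

lemma sub_img: assumes "k \<in> {1..n}"
  shows "{S \<in> subsets12 n. k \<in> S} = (\<lambda>j. {k,j}) ` {1..n}"
proof
  show "(\<lambda>j. {k,j}) ` {1..n} \<subseteq> {S \<in> subsets12 n. k \<in> S}"
    using assms by (auto simp: subsets12_def card_insert_if split: if_splits)
  show "{S \<in> subsets12 n. k \<in> S} \<subseteq> (\<lambda>j. {k,j}) ` {1..n}"
  proof
    fix S assume S: "S \<in> {S \<in> subsets12 n. k \<in> S}"
    hence sub: "S \<subseteq> {1..n}" and kS: "k \<in> S" and c: "card S = 1 \<or> card S = 2"
      by (auto simp: subsets12_def)
    from c show "S \<in> (\<lambda>j. {k,j}) ` {1..n}"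
    proof
      assume "card S = 1"
      then obtain x where "S = {x}" by (auto simp: card_1_singleton_iff)
      with kS assms show ?thesis by (auto intro!: image_eqI[where x=k])
    next
      assume "card S = 2"
      then obtain x y where xy: "S = {x,y}" by (auto simp: card_2_iff)
      show ?thesis
      proof (cases "k = x")
        case True with xy sub show ?thesis by (auto intro!: image_eqI[where x=y])
      next
        case False with xy kS sub show ?thesis by (auto intro!: image_eqI[where x=x])
      qed
    qed
  qed
qed

lemma Q1_z1: "qform (subsets12 n) Q1 (z1 a b) = 6 * (\<Sum>k=1..n. (PP n a b k k)^2)"
proof -
  have "(\<Sum>S\<in>subsets12 n. (if k \<in> S then 1 else 0) * z1 a b S) = PP n a b k k" if k: "k \<in> {1..n}" for k
  proof -
    have "(\<Sum>S\<in>subsets12 n. (if k \<in> S then 1 else 0) * z1 a b S) = (\<Sum>S\<in>subsets12 n. if k \<in> S then z1 a b S else 0)"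
      by (rule sum.cong) auto
    also have "\<dots> = (\<Sum>S\<in>{S \<in> subsets12 n. k \<in> S}. z1 a b S)"
      by (simp add: sum.inter_filter fin_sub)
    also have "\<dots> = (\<Sum>S\<in>(\<lambda>j. {k,j}) ` {1..n}. z1 a b S)" using sub_img[OF k] by simp
    also have "\<dots> = (\<Sum>j=1..n. z1 a b {k,j})"
      by (subst sum.reindex) (auto simp: inj_on_def doubleton_eq_iff)
    also have "\<dots> = PP n a b k k" by (simp add: z1_def PP_def)
    finally show ?thesis .
  qed
  then show ?thesis by (simp add: Q1_form)
qed

lemma Q2_form: "qform {1..2*n} (Q2 n) z = 4 * (\<Sum>s=1..n. z s)^2 + 4 * (\<Sum>s\<in>{n+1..2*n}. z s)^2
   + 4 * ((\<Sum>s=1..n. z s) * (\<Sum>s\<in>{n+1..2*n}. z s))"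
proof -
  let ?A = "{1..n}" and ?B = "{n+1..2*n}"
  have blk: "(\<Sum>s\<in>X. \<Sum>s'\<in>Y. z s * Q2 n s s' * z s') = c * ((\<Sum>s\<in>X. z s) * (\<Sum>s\<in>Y. z s))"
    if "\<And>s s'. s \<in> X \<Longrightarrow> s' \<in> Y \<Longrightarrow> Q2 n s s' = c" for X Y c
  proof -
    have "(\<Sum>s\<in>X. \<Sum>s'\<in>Y. z s * Q2 n s s' * z s') = (\<Sum>s\<in>X. \<Sum>s'\<in>Y. c * (z s * z s'))"
      using that by (intro sum.cong refl) simp
    also have "\<dots> = c * ((\<Sum>s\<in>X. z s) * (\<Sum>s\<in>Y. z s))"
      unfolding sum_product by (simp only: sum_distrib_left)
    finally show ?thesis .
  qed
  have U: "{1..2*n} = ?A \<union> ?B" by auto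
  have D: "?A \<inter> ?B = {}" by auto
  have "qform {1..2*n} (Q2 n) z = (\<Sum>s\<in>?A. \<Sum>s'\<in>?A. z s * Q2 n s s' * z s') + (\<Sum>s\<in>?A. \<Sum>s'\<in>?B. z s * Q2 n s s' * z s')
     + ((\<Sum>s\<in>?B. \<Sum>s'\<in>?A. z s * Q2 n s s' * z s') + (\<Sum>s\<in>?B. \<Sum>s'\<in>?B. z s * Q2 n s s' * z s'))"
    unfolding qform_def U by (simp add: sum.union_disjoint D sum.distrib)
  also have "\<dots> = 4 * ((\<Sum>s\<in>?A. z s) * (\<Sum>s\<in>?A. z s)) + 2 * ((\<Sum>s\<in>?A. z s) * (\<Sum>s\<in>?B. z s))
     + (2 * ((\<Sum>s\<in>?B. z s) * (\<Sum>s\<in>?A. z s)) + 4 * ((\<Sum>s\<in>?B. z s) * (\<Sum>s\<in>?B. z s)))"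
    by (subst blk, simp add: Q2_def)+ (rule refl)
  finally show ?thesis by (simp add: power2_eq_square algebra_simps)
qed

lemma psd_Q2: "psd {1..2*n} (Q2 n)"
  unfolding psd_def
proof
  show "\<forall>s\<in>{1..2*n}. \<forall>s'\<in>{1..2*n}. Q2 n s s' = Q2 n s' s" by (simp add: Q2_def)
  show "\<forall>z. 0 \<le> qform {1..2*n} (Q2 n) z"
  proof
    fix z :: "nat \<Rightarrow> real"
    have "0 \<le> 2 * ((\<Sum>s=1..n. z s) + (\<Sum>s\<in>{n+1..2*n}. z s))^2 + 2 * (\<Sum>s=1..n. z s)^2 + 2 * (\<Sum>s\<in>{n+1..2*n}. z s)^2"
      by simp
    then show "0 \<le> qform {1..2*n} (Q2 n) z" unfolding Q2_form by (simp add: power2_eq_square algebra_simps)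
  qed
qed

lemma Q2_z2: "qform {1..2*n} (Q2 n) (z2 n a b i j) = 4 * (PP n a b i j)^2 + 4 * (PP n a b j i)^2 + 4 * (PP n a b i j * PP n a b j i)"
proof -
  have u: "(\<Sum>s=1..n. z2 n a b i j s) = PP n a b i j"
    unfolding PP_def z2_def by (rule sum.cong) auto
  have "(\<Sum>s\<in>{n+1..2*n}. z2 n a b i j s) = (\<Sum>s\<in>(\<lambda>k. k + n) ` {1..n}. z2 n a b i j s)"
    by (rule sum.cong[OF _ refl]) (auto simp: image_iff intro!: bexI[where x="_ - n"])
  also have "\<dots> = (\<Sum>k=1..n. z2 n a b i j (k + n))" by (subst sum.reindex) auto
  also have "\<dots> = PP n a b j i" unfolding PP_def z2_def by (rule sum.cong) auto
  finally show ?thesis unfolding Q2_form u by simp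
qed

lemma pairs_sum: fixes T :: "nat \<Rightarrow> nat \<Rightarrow> real" and n :: nat assumes "\<And>i j. T i j = T j i"
  shows "2 * (\<Sum>(i,j)\<in>{(i,j). 1 \<le> i \<and> i < j \<and> j \<le> n}. T i j) + (\<Sum>i=1..n. T i i) = (\<Sum>i=1..n. \<Sum>j=1..n. (T i j :: real))"
proof (induction n)
  case 0
  have e: "{(i,j). 1 \<le> i \<and> i < j \<and> j \<le> (0::nat)} = {}" by auto
  show ?case by (simp only: e sum.empty) simp
next
  case (Suc n)
  let ?P = "\<lambda>n. {(i,j). 1 \<le> i \<and> i < j \<and> j \<le> n}"
  have fin: "finite (?P n)" by (rule finite_subset[of _ "{1..n} \<times> {1..n}"]) auto
  have U: "?P (Suc n) = ?P n \<union> (\<lambda>i. (i, Suc n)) ` {1..n}" by auto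
  have D: "?P n \<inter> (\<lambda>i. (i, Suc n)) ` {1..n} = {}" by auto
  have "(\<Sum>(i,j)\<in>?P (Suc n). T i j) = (\<Sum>(i,j)\<in>?P n. T i j) + (\<Sum>i=1..n. T i (Suc n))"
    unfolding U by (subst sum.union_disjoint) (auto simp: fin fin[simplified] D sum.reindex inj_on_def)
  moreover have "(\<Sum>i=1..Suc n. \<Sum>j=1..Suc n. T i j) = (\<Sum>i=1..n. \<Sum>j=1..n. T i j) + 2 * (\<Sum>i=1..n. T i (Suc n)) + T (Suc n) (Suc n)"
  proof -
    have s: "\<And>g. (\<Sum>i=1..Suc n. g i) = (\<Sum>i=1..n. g i) + (g (Suc n) :: real)" by simp
    have "(\<Sum>i=1..Suc n. \<Sum>j=1..Suc n. T i j) = (\<Sum>i=1..n. (\<Sum>j=1..n. T i j) + T i (Suc n)) + ((\<Sum>j=1..n. T (Suc n) j) + T (Suc n) (Suc n))"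
      by (simp only: s)
    also have "(\<Sum>j=1..n. T (Suc n) j) = (\<Sum>j=1..n. T j (Suc n))" by (rule sum.cong[OF refl]) (rule assms)
    finally show ?thesis by (simp add: sum.distrib)
  qed
  ultimately show ?case using Suc.IH by simp
qed

lemma identity: "trace_coeff n a b 4 2 = qform (subsets12 n) Q1 (z1 a b)
            + (\<Sum>(i, j) \<in> {(i, j). 1 \<le> i \<and> i < j \<and> j \<le> n}.
                 qform {1..2*n} (Q2 n) (z2 n a b i j))"
proof -
  define P where "P = PP n a b"
  define T where "T i j = 4 * (P i j)^2 + 4 * (P j i)^2 + 4 * (P i j * P j i)" for i j
  have Tsym: "\<And>i j. T i j = T j i" unfolding T_def by (simp add: mult_ac)
  have X: "(\<Sum>(i, j) \<in> {(i, j). 1 \<le> i \<and> i < j \<and> j \<le> n}. qform {1..2*n} (Q2 n) (z2 n a b i j))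
     = (\<Sum>(i, j) \<in> {(i, j). 1 \<le> i \<and> i < j \<and> j \<le> n}. T i j)"
    by (rule sum.cong) (auto simp: Q2_z2 Q2_z2[simplified] T_def P_def)
  note ps = pairs_sum[of T n, OF Tsym]
  have S1: "(\<Sum>i=1..n. \<Sum>j=1..n. (P j i)^2) = (\<Sum>i=1..n. \<Sum>j=1..n. (P i j)^2)" by (rule sum.swap)
  have full0: "(\<Sum>i=1..n. \<Sum>j=1..n. T i j) = 4 * (\<Sum>i=1..n. \<Sum>j=1..n. (P i j)^2) + 4 * (\<Sum>i=1..n. \<Sum>j=1..n. (P j i)^2) + 4 * (\<Sum>i=1..n. \<Sum>j=1..n. P i j * P j i)"
    unfolding T_def by (simp add: sum.distrib sum_distrib_left)
  have full: "(\<Sum>i=1..n. \<Sum>j=1..n. T i j) = 8 * (\<Sum>i=1..n. \<Sum>j=1..n. (P i j)^2) + 4 * (\<Sum>i=1..n. \<Sum>j=1..n. P i j * P j i)"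
    unfolding full0 S1 by simp
  have diag: "(\<Sum>i=1..n. T i i) = 12 * (\<Sum>i=1..n. (P i i)^2)"
    unfolding T_def by (simp add: sum_distrib_left power2_eq_square)
  have L: "trace_coeff n a b 4 2 = 4 * (\<Sum>i=1..n. \<Sum>j=1..n. (P i j)^2) + 2 * (\<Sum>i=1..n. \<Sum>j=1..n. P i j * P j i)"
    unfolding lhs_PP P_def by (simp add: sum.distrib sum_distrib_left)
  show ?thesis unfolding X Q1_z1 P_def[symmetric] L using ps full diag by simp
qed

theorem theorem2:
  fixes n :: nat
  assumes "n \<ge> 1"
  shows "psd (subsets12 n) Q1 \<and> psd {1..2*n} (Q2 n)
    \<and> (\<forall>a b :: nat set \<Rightarrow> real.
          trace_coeff n a b 4 2
          = qform (subsets12 n) Q1 (z1 a b)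
            + (\<Sum>(i, j) \<in> {(i, j). 1 \<le> i \<and> i < j \<and> j \<le> n}.
                 qform {1..2*n} (Q2 n) (z2 n a b i j)))
    \<and> (\<forall>a b :: nat set \<Rightarrow> real. trace_coeff n a b 4 2 \<ge> 0)"
proof (intro conjI allI)
  show "psd (subsets12 n) Q1" by (rule psd_Q1)
  show "psd {1..2*n} (Q2 n)" by (rule psd_Q2)
  fix a b :: "nat set \<Rightarrow> real"
  show "trace_coeff n a b 4 2 = qform (subsets12 n) Q1 (z1 a b)
            + (\<Sum>(i, j) \<in> {(i, j). 1 \<le> i \<and> i < j \<and> j \<le> n}.
                 qform {1..2*n} (Q2 n) (z2 n a b i j))" by (rule identity)
next
  fix a b :: "nat set \<Rightarrow> real"
  have "0 \<le> qform (subsets12 n) Q1 (z1 a b)" using psd_Q1 unfolding psd_def by blast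
  moreover have "0 \<le> (\<Sum>(i, j) \<in> {(i, j). 1 \<le> i \<and> i < j \<and> j \<le> n}. qform {1..2*n} (Q2 n) (z2 n a b i j))"
    using psd_Q2[of n] unfolding psd_def by (intro sum_nonneg) auto
  ultimately show "0 \<le> trace_coeff n a b 4 2" unfolding identity by simp
qed
end
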